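(* For every positively oriented $J$-basis $E$ of $\mathbb{R}^{2n,2n-1}$, the closed crooked halfspace $\overline{\mathcal{H}}_E$ is the topological closure of the open crooked halfspace $\mathcal{H}_E$.
   Context: $\mathbb{R}^{2n,2n-1}$ is $\mathbb{R}^{4n-1}$ with form $v^TJw$, $J$ antidiagonal with $J_{i,4n-i}=(-1)^i$; a $J$-basis is one in which the Gram matrix is $J$. For a nonzero vector $v$ with coordinates $(v_1,\dots,v_{4n-1})$ in the basis $E$, the upper sign variation $S^+_E(v)$ is the number of sign changes in the coordinate sequence when a sign is assigned to each zero coordinate so as to maximize this number, and the lower sign variation $S^-_E(v)$ is the number of sign changes when signs of zero coordinates are chosen to minimize it (equivalently, the number of sign changes among nonzero coordinates). The open crooked halfspace is $\mathcal{H}_E=\{v: S^+_E(v)\le 2n-1$, and in case of equality the sign of the last coordinate used in computing $S^+_E$ is positive$\}$; the closed crooked halfspace is $\overline{\mathcal{H}}_E=\{v: S^-_E(v)\le 2n-1$, and in case of equality the last nonzero coordinate is positive$\}$. *)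

theory Defs
  imports "HOL-Analysis.Analysis"
begin

(* R^{2n,2n-1}: vectors of R^{4n-1} are modelled as functions nat => real
   supported on the index set {1..4n-1} (coordinates are 1-based as in the paper).
   The ambient topology is the product topology on nat => real, which on this
   (closed) subspace is the usual Euclidean topology of R^{4n-1}. *)

definition dimN :: "nat \<Rightarrow> nat" where
  "dimN n = 4 * n - 1"

definition Vsp :: "nat \<Rightarrow> (nat \<Rightarrow> real) set" where
  "Vsp n = {v. \<forall>i. i \<notin> {1..dimN n} \<longrightarrow> v i = 0}"

definition Jmat :: "nat \<Rightarrow> nat \<Rightarrow> nat \<Rightarrow> real" where
  "Jmat n i j = (if i + j = 4 * n then (-1) ^ i else 0)"

definition Jform :: "nat \<Rightarrow> (nat \<Rightarrow> real) \<Rightarrow> (nat \<Rightarrow> real) \<Rightarrow> real" where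
  "Jform n v w = (\<Sum>i\<in>{1..dimN n}. \<Sum>j\<in>{1..dimN n}. v i * Jmat n i j * w j)"

definition is_basis :: "nat \<Rightarrow> (nat \<Rightarrow> nat \<Rightarrow> real) \<Rightarrow> bool" where
  "is_basis n E \<longleftrightarrow>
     (\<forall>i\<in>{1..dimN n}. E i \<in> Vsp n)
   \<and> (\<forall>c. (\<forall>k. (\<Sum>i\<in>{1..dimN n}. c i * E i k) = 0) \<longrightarrow> (\<forall>i\<in>{1..dimN n}. c i = 0))
   \<and> (\<forall>v\<in>Vsp n. \<exists>c. v = (\<lambda>k. \<Sum>i\<in>{1..dimN n}. c i * E i k))"

definition J_basis :: "nat \<Rightarrow> (nat \<Rightarrow> nat \<Rightarrow> real) \<Rightarrow> bool" where
  "J_basis n E \<longleftrightarrow> is_basis n E \<and>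
     (\<forall>i\<in>{1..dimN n}. \<forall>j\<in>{1..dimN n}. Jform n (E i) (E j) = Jmat n i j)"

(* positively oriented: the matrix with columns E 1, ..., E (4n-1) (in standard
   coordinates) has positive determinant (Leibniz formula). Entry (i,j) = E j i. *)
definition pos_oriented :: "nat \<Rightarrow> (nat \<Rightarrow> nat \<Rightarrow> real) \<Rightarrow> bool" where
  "pos_oriented n E \<longleftrightarrow>
     (\<Sum>p | p permutes {1..dimN n}. of_int (sign p) * (\<Prod>i\<in>{1..dimN n}. E (p i) i)) > 0"

definition coords :: "nat \<Rightarrow> (nat \<Rightarrow> nat \<Rightarrow> real) \<Rightarrow> (nat \<Rightarrow> real) \<Rightarrow> nat \<Rightarrow> real" where
  "coords n E v = (THE c. (\<forall>i. i \<notin> {1..dimN n} \<longrightarrow> c i = 0) \<and>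
                           v = (\<lambda>k. \<Sum>i\<in>{1..dimN n}. c i * E i k))"

definition sign_assignment :: "nat \<Rightarrow> (nat \<Rightarrow> real) \<Rightarrow> (nat \<Rightarrow> real) \<Rightarrow> bool" where
  "sign_assignment m c s \<longleftrightarrow>
     (\<forall>i\<in>{1..m}. (s i = 1 \<or> s i = -1) \<and> (c i \<noteq> 0 \<longrightarrow> s i = sgn (c i)))"

definition sign_changes :: "nat \<Rightarrow> (nat \<Rightarrow> real) \<Rightarrow> nat" where
  "sign_changes m s = card {i\<in>{1..<m}. s i * s (i + 1) < 0}"

definition upper_var :: "nat \<Rightarrow> (nat \<Rightarrow> real) \<Rightarrow> nat" where
  "upper_var m c = Max {sign_changes m s | s. sign_assignment m c s}"

definition lower_var :: "nat \<Rightarrow> (nat \<Rightarrow> real) \<Rightarrow> nat" where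
  "lower_var m c = Min {sign_changes m s | s. sign_assignment m c s}"

definition open_crooked_halfspace :: "nat \<Rightarrow> (nat \<Rightarrow> nat \<Rightarrow> real) \<Rightarrow> (nat \<Rightarrow> real) set" where
  "open_crooked_halfspace n E =
     {v \<in> Vsp n. let c = coords n E v; m = dimN n in
        upper_var m c \<le> 2 * n - 1 \<and>
        (upper_var m c = 2 * n - 1 \<longrightarrow>
           (\<exists>s. sign_assignment m c s \<and> sign_changes m s = upper_var m c \<and> s m = 1))}"

definition closed_crooked_halfspace :: "nat \<Rightarrow> (nat \<Rightarrow> nat \<Rightarrow> real) \<Rightarrow> (nat \<Rightarrow> real) set" where
  "closed_crooked_halfspace n E =
     {v \<in> Vsp n. let c = coords n E v; m = dimN n in
        lower_var m c \<le> 2 * n - 1 \<and>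
        (lower_var m c = 2 * n - 1 \<longrightarrow>
           (\<exists>i\<in>{1..m}. c i > 0 \<and> (\<forall>j. i < j \<and> j \<le> m \<longrightarrow> c j = 0)))}"

end

theory Submission imports Defs begin

definition Lf :: "nat \<Rightarrow> (nat \<Rightarrow> nat \<Rightarrow> real) \<Rightarrow> (nat \<Rightarrow> real) \<Rightarrow> nat \<Rightarrow> real" where
  "Lf n E g = (\<lambda>k. \<Sum>i\<in>{1..dimN n}. g i * E i k)"

definition Kf :: "nat \<Rightarrow> (nat \<Rightarrow> nat \<Rightarrow> real) \<Rightarrow> (nat \<Rightarrow> real) \<Rightarrow> nat \<Rightarrow> real" where
  "Kf n E v j = (if j \<in> {1..dimN n} then (-1)^j * Jform n (E (4*n - j)) v else 0)"

lemma Jform_Lf: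
  "Jform n u (Lf n E g) = (\<Sum>j\<in>{1..dimN n}. g j * Jform n u (E j))"
proof -
  let ?I = "{1..dimN n}"
  have "Jform n u (Lf n E g) = (\<Sum>i\<in>?I. \<Sum>k\<in>?I. \<Sum>j\<in>?I. u i * Jmat n i k * (g j * E j k))"
    by (simp add: Jform_def Lf_def sum_distrib_left)
  also have "\<dots> = (\<Sum>i\<in>?I. \<Sum>j\<in>?I. \<Sum>k\<in>?I. u i * Jmat n i k * (g j * E j k))"
    by (rule sum.cong[OF refl], rule sum.swap)
  also have "\<dots> = (\<Sum>j\<in>?I. \<Sum>i\<in>?I. \<Sum>k\<in>?I. u i * Jmat n i k * (g j * E j k))"
    by (rule sum.swap)
  also have "\<dots> = (\<Sum>j\<in>?I. g j * Jform n u (E j))"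
    by (simp add: Jform_def sum_distrib_left mult_ac)
  finally show ?thesis .
qed

lemma sum_Jmat:
  assumes "i \<in> {1..dimN n}"
  shows "(\<Sum>j\<in>{1..dimN n}. g j * Jmat n i j) = g (4*n - i) * (-1)^i"
proof -
  have "(\<Sum>j\<in>{1..dimN n}. g j * Jmat n i j) = (\<Sum>j\<in>{1..dimN n}. if j = 4*n - i then g j * (-1)^i else 0)"
    using assms by (intro sum.cong) (auto simp: Jmat_def dimN_def)
  also have "\<dots> = g (4*n - i) * (-1)^i"
    using assms by (auto simp: dimN_def)
  finally show ?thesis .
qed

lemma KL:
  assumes "J_basis n E" and supp: "\<forall>i. i \<notin> {1..dimN n} \<longrightarrow> g i = 0"
  shows "Kf n E (Lf n E g) = g"
proof
  fix j
  show "Kf n E (Lf n E g) j = g j"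
  proof (cases "j \<in> {1..dimN n}")
    case False thus ?thesis using supp unfolding Kf_def by (simp only: if_False) auto
  next
    case True
    let ?i = "4*n - j"
    have iI: "?i \<in> {1..dimN n}" using True by (auto simp: dimN_def)
    have "Kf n E (Lf n E g) j = (-1)^j * (\<Sum>l\<in>{1..dimN n}. g l * Jform n (E ?i) (E l))"
      using True by (simp add: Kf_def Jform_Lf)
    also have "\<dots> = (-1)^j * (\<Sum>l\<in>{1..dimN n}. g l * Jmat n ?i l)"
      using assms(1) iI by (auto simp: J_basis_def intro!: sum.cong)
    also have "\<dots> = (-1)^j * (g (4*n - ?i) * (-1)^?i)"
      using sum_Jmat[OF iI, of g] by simp
    also have "4*n - ?i = j" using True by (auto simp: dimN_def)
    also have "(-1::real)^j * (g j * (-1)^?i) = g j * (-1)^(j + ?i)"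
      by (simp add: power_add mult_ac)
    also have "j + ?i = 2 * (2*n)" using True by (auto simp: dimN_def)
    finally show ?thesis by (simp add: power_mult)
  qed
qed

lemma Lf_Vsp: "Lf n E g \<in> Vsp n" if "J_basis n E"
  using that by (auto simp: Lf_def Vsp_def J_basis_def is_basis_def intro!: sum.neutral)

lemma coords_Lf:
  assumes "J_basis n E" and supp: "\<forall>i. i \<notin> {1..dimN n} \<longrightarrow> g i = 0"
  shows "coords n E (Lf n E g) = g"
  unfolding coords_def
proof (rule the_equality)
  show "(\<forall>i. i \<notin> {1..dimN n} \<longrightarrow> g i = 0) \<and> Lf n E g = (\<lambda>k. \<Sum>i\<in>{1..dimN n}. g i * E i k)"
    using supp by (simp add: Lf_def)
next
  fix c assume c: "(\<forall>i. i \<notin> {1..dimN n} \<longrightarrow> c i = 0) \<and> Lf n E g = (\<lambda>k. \<Sum>i\<in>{1..dimN n}. c i * E i k)"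
  hence "Lf n E g = Lf n E c" by (simp add: Lf_def)
  hence "Kf n E (Lf n E g) = Kf n E (Lf n E c)" by simp
  moreover have "Kf n E (Lf n E c) = c" using KL[OF assms(1)] c by blast
  moreover have "Kf n E (Lf n E g) = g" using KL[OF assms(1)] supp by blast
  ultimately show "c = g" by simp
qed

lemma Vsp_Lf:
  assumes "J_basis n E" "v \<in> Vsp n"
  shows "\<exists>g. (\<forall>i. i \<notin> {1..dimN n} \<longrightarrow> g i = 0) \<and> v = Lf n E g"
proof -
  obtain c where c: "v = (\<lambda>k. \<Sum>i\<in>{1..dimN n}. c i * E i k)"
    using assms by (auto simp: J_basis_def is_basis_def)
  define g where "g i = (if i \<in> {1..dimN n} then c i else 0)" for i
  have "v = Lf n E g" unfolding c Lf_def g_def by (intro ext sum.cong) auto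
  moreover have "\<forall>i. i \<notin> {1..dimN n} \<longrightarrow> g i = 0" by (simp add: g_def)
  ultimately show ?thesis by blast
qed

lemma coords_Vsp:
  assumes "J_basis n E" "v \<in> Vsp n"
  shows "v = Lf n E (coords n E v)" "\<forall>i. i \<notin> {1..dimN n} \<longrightarrow> coords n E v i = 0"
    "coords n E v = Kf n E v"
  using Vsp_Lf[OF assms] coords_Lf[OF assms(1)] KL[OF assms(1)] by auto

lemma cont_Jform: "continuous_on UNIV (\<lambda>v. Jform n u v)"
  unfolding Jform_def by (intro continuous_intros continuous_on_product_coordinates)

lemma closed_Vsp: "closed (Vsp n)"
proof -
  have "Vsp n = (\<Inter>i\<in>-{1..dimN n}. {v. v i = 0})" by (auto simp: Vsp_def)
  moreover have "closed {v::nat\<Rightarrow>real. v i = 0}" for i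
    by (intro closed_Collect_eq continuous_on_product_coordinates continuous_intros)
  ultimately show ?thesis by auto
qed


lemma sign_changes_cong:
  assumes "\<forall>i\<in>{1..m}. s i = s' i"
  shows "sign_changes m s = sign_changes m s'"
proof -
  have "{i\<in>{1..<m}. s i * s (i + 1) < 0} = {i\<in>{1..<m}. s' i * s' (i + 1) < 0}"
    using assms by auto
  thus ?thesis by (simp add: sign_changes_def)
qed

lemma sign_changes_le: "sign_changes m s \<le> m"
proof -
  have "sign_changes m s \<le> card {1..<m}" unfolding sign_changes_def
    by (rule card_mono) auto
  thus ?thesis by simp
qed

definition VS where "VS m c = {sign_changes m s | s. sign_assignment m c s}"

lemma VS_finite: "finite (VS m c)"
  by (rule finite_subset[of _ "{..m}"]) (auto simp: VS_def sign_changes_le)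

lemma s0_assign: "sign_assignment m c (\<lambda>i. if c i = 0 then 1 else sgn (c i))"
  by (auto simp: sign_assignment_def sgn_if)

lemma VS_ne: "VS m c \<noteq> {}"
  using s0_assign unfolding VS_def by blast

lemma lower_le: "sign_assignment m c s \<Longrightarrow> lower_var m c \<le> sign_changes m s"
  unfolding lower_var_def using VS_finite[of m c] by (intro Min_le) (auto simp: VS_def)

lemma upper_ge: "sign_assignment m c s \<Longrightarrow> sign_changes m s \<le> upper_var m c"
  unfolding upper_var_def using VS_finite[of m c] by (intro Max_ge) (auto simp: VS_def)

lemma lower_attained: "\<exists>s. sign_assignment m c s \<and> sign_changes m s = lower_var m c"
proof -
  have "lower_var m c \<in> VS m c" unfolding lower_var_def
    using VS_finite VS_ne unfolding VS_def by (intro Min_in) auto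
  thus ?thesis by (auto simp: VS_def)
qed

lemma lower_le_upper: "lower_var m c \<le> upper_var m c"
  using lower_attained[of m c] upper_ge by fastforce

lemma lower_zero:
  assumes "\<forall>i\<in>{1..m}. c i = 0"
  shows "lower_var m c = 0"
proof -
  have "sign_assignment m c (\<lambda>i. 1)" using assms by (auto simp: sign_assignment_def)
  moreover have "sign_changes m (\<lambda>i. 1) = 0" by (simp add: sign_changes_def)
  ultimately show ?thesis using lower_le by fastforce
qed

lemma nonzero_vars:
  assumes "\<forall>i\<in>{1..m}. d i \<noteq> 0"
  shows "upper_var m d = sign_changes m (\<lambda>i. sgn (d i))"
    "sign_assignment m d (\<lambda>i. sgn (d i))"
proof -
  show sa: "sign_assignment m d (\<lambda>i. sgn (d i))" using assms
    by (auto simp: sign_assignment_def sgn_if)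
  have "VS m d = {sign_changes m (\<lambda>i. sgn (d i))}"
  proof -
    have "sign_changes m s = sign_changes m (\<lambda>i. sgn (d i))" if "sign_assignment m d s" for s
      using that assms by (intro sign_changes_cong) (auto simp: sign_assignment_def)
    thus ?thesis using sa unfolding VS_def by blast
  qed
  thus "upper_var m d = sign_changes m (\<lambda>i. sgn (d i))"
    by (simp add: upper_var_def VS_def[symmetric])
qed

definition trunc :: "(nat \<Rightarrow> real) \<Rightarrow> nat \<Rightarrow> nat \<Rightarrow> real" where
  "trunc s p i = (if i \<le> p then s i else s p)"
definition altx :: "(nat \<Rightarrow> real) \<Rightarrow> nat \<Rightarrow> nat \<Rightarrow> real" where
  "altx s p i = (if i \<le> p then s i else s p * (-1)^(i-p))"

definition Ap :: "(nat \<Rightarrow> real) \<Rightarrow> nat \<Rightarrow> nat set" where "Ap s p = {i\<in>{1..<p}. s i * s (i + 1) < (0::real)}"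

lemma pm1_sq: "s = 1 \<or> s = -1 \<Longrightarrow> s * s = (1::real)" by auto

lemma trunc_changes:
  assumes "s p = 1 \<or> s p = -1" "p \<le> m"
  shows "sign_changes m (trunc s p) = card (Ap s p)"
proof -
  have "{i\<in>{1..<m}. trunc s p i * trunc s p (i + 1) < 0} = Ap s p"
  proof (rule set_eqI)
    fix i
    show "i \<in> {i\<in>{1..<m}. trunc s p i * trunc s p (i + 1) < 0} \<longleftrightarrow> i \<in> Ap s p"
    proof (cases "i < p")
      case True thus ?thesis using assms by (auto simp: trunc_def Ap_def)
    next
      case False thus ?thesis using assms pm1_sq[OF assms(1)] by (auto simp: trunc_def Ap_def)
    qed
  qed
  thus ?thesis by (simp add: sign_changes_def)
qed

lemma altx_changes:
  assumes "s p = 1 \<or> s p = -1" "p \<le> m" "1 \<le> p"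
  shows "sign_changes m (altx s p) = card (Ap s p) + (m - p)"
proof -
  have "{i\<in>{1..<m}. altx s p i * altx s p (i + 1) < 0} = Ap s p \<union> {p..<m}"
  proof (rule set_eqI)
    fix i
    show "i \<in> {i\<in>{1..<m}. altx s p i * altx s p (i + 1) < 0} \<longleftrightarrow> i \<in> Ap s p \<union> {p..<m}"
    proof (cases "i < p")
      case True thus ?thesis using assms by (auto simp: altx_def Ap_def)
    next
      case False
      hence "altx s p i * altx s p (i + 1) = (s p * s p) * ((-1)^(i-p) * (-1)^(Suc (i - p)))"
        by (auto simp: altx_def Suc_diff_le mult_ac)
      also have "\<dots> = -1" using pm1_sq[OF assms(1)] by simp
      finally show ?thesis using False assms by (auto simp: Ap_def)
    qed
  qed
  moreover have "Ap s p \<inter> {p..<m} = {}" by (auto simp: Ap_def)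
  moreover have "finite (Ap s p)" by (auto simp: Ap_def)
  ultimately show ?thesis by (simp add: sign_changes_def card_Un_disjoint)
qed

lemma Ap_sub: assumes "p \<le> m" shows "Ap s p \<subseteq> {i\<in>{1..<m}. s i * s (i + 1) < 0}"
  using assms by (auto simp: Ap_def)

lemma Ap_le: assumes "p \<le> m" shows "card (Ap s p) \<le> sign_changes m s"
  unfolding sign_changes_def using assms by (intro card_mono) (auto simp: Ap_def)

lemma trunc_assign:
  assumes "sign_assignment m c s" "p \<in> {1..m}" "\<forall>j. p < j \<and> j \<le> m \<longrightarrow> c j = 0"
  shows "sign_assignment m c (trunc s p)"
  using assms by (auto simp: sign_assignment_def trunc_def)

lemma altx_assign:
  assumes "sign_assignment m c s" "p \<in> {1..m}" "\<forall>j. p < j \<and> j \<le> m \<longrightarrow> c j = 0"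
  shows "sign_assignment m c (altx s p)"
  unfolding sign_assignment_def
proof (intro ballI conjI impI)
  fix i assume i: "i \<in> {1..m}"
  have pk: "(-1::real)^k = 1 \<or> (-1::real)^k = -1" for k by (cases "even k") auto
  have sp: "s p = 1 \<or> s p = -1" using assms(1,2) by (auto simp: sign_assignment_def)
  show "altx s p i = 1 \<or> altx s p i = -1"
  proof (cases "i \<le> p")
    case True thus ?thesis using assms(1) i by (auto simp: sign_assignment_def altx_def)
  next
    case False thus ?thesis using sp pk[of "i-p"] by (auto simp: altx_def)
  qed
  assume "c i \<noteq> 0"
  thus "altx s p i = sgn (c i)" using assms i by (cases "i \<le> p") (auto simp: sign_assignment_def altx_def)
qed

lemma change_exists:
  fixes s :: "nat \<Rightarrow> real" and p q :: nat
  assumes pm: "\<forall>i\<in>{p..q}. s i = 1 \<or> s i = (-1::real)" and "p \<le> q" and "s p \<noteq> s q"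
  shows "\<exists>i\<in>{p..<q}. s i * s (i + 1) < 0"
proof (rule ccontr)
  assume "\<not> ?thesis"
  hence nc: "\<forall>i\<in>{p..<q}. s i * s (i + 1) \<ge> 0" by auto
  have "p + d \<le> q \<longrightarrow> s (p + d) = s p" for d :: nat
  proof (induct d)
    case (Suc d)
    show ?case
    proof
      assume h: "p + Suc d \<le> q"
      hence "s (p + d) = s p" using Suc by simp
      moreover have "s (p + d) * s (p + d + 1) \<ge> 0" using nc h by auto
      moreover have "s (p+d) = 1 \<or> s (p+d) = -1" "s (p+d+1) = 1 \<or> s (p+d+1) = -1"
        using pm h by auto
      ultimately show "s (p + Suc d) = s p" by auto
    qed
  qed simp
  from this[of "q - p"] assms show False by simp
qed


lemma assign_pm: "sign_assignment m c s \<Longrightarrow> i \<in> {1..m} \<Longrightarrow> s i = 1 \<or> s i = -1"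
  by (auto simp: sign_assignment_def)

lemma lower_lt_upper:
  assumes "p \<in> {1..m}" "\<forall>j. p < j \<and> j \<le> m \<longrightarrow> c j = 0" "p < m"
  shows "lower_var m c < upper_var m c"
proof -
  let ?s = "\<lambda>i. if c i = 0 then 1 else sgn (c i)"
  have sa: "sign_assignment m c ?s" by (rule s0_assign)
  have sp: "?s p = 1 \<or> ?s p = -1" using assign_pm[OF sa assms(1)] .
  have "lower_var m c \<le> sign_changes m (trunc ?s p)"
    by (rule lower_le[OF trunc_assign[OF sa assms(1,2)]])
  also have "\<dots> = card (Ap ?s p)" using trunc_changes[of ?s p m, OF sp] assms(1) by simp
  also have "\<dots> < card (Ap ?s p) + (m - p)" using assms(3) by simp
  also have "\<dots> = sign_changes m (altx ?s p)" using altx_changes[of ?s p m, OF sp] assms(1) by simp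
  also have "\<dots> \<le> upper_var m c" by (rule upper_ge[OF altx_assign[OF sa assms(1,2)]])
  finally show ?thesis .
qed

definition Cc :: "nat \<Rightarrow> nat \<Rightarrow> (nat \<Rightarrow> real) \<Rightarrow> bool" where
  "Cc m k c \<longleftrightarrow> lower_var m c \<le> k \<and>
     (lower_var m c = k \<longrightarrow> (\<exists>i\<in>{1..m}. c i > 0 \<and> (\<forall>j. i < j \<and> j \<le> m \<longrightarrow> c j = 0)))"

definition Oc :: "nat \<Rightarrow> nat \<Rightarrow> (nat \<Rightarrow> real) \<Rightarrow> bool" where
  "Oc m k c \<longleftrightarrow> upper_var m c \<le> k \<and>
     (upper_var m c = k \<longrightarrow> (\<exists>s. sign_assignment m c s \<and> sign_changes m s = upper_var m c \<and> s m = 1))"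

lemma last_nonzero:
  fixes c :: "nat \<Rightarrow> real" and m :: nat
  assumes "\<exists>i\<in>{1..m}. c i \<noteq> 0"
  obtains p where "p \<in> {1..m}" "c p \<noteq> 0" "\<forall>j. p < j \<and> j \<le> m \<longrightarrow> c j = 0"
proof -
  let ?F = "{i\<in>{1..m}. c i \<noteq> 0}"
  have fin: "finite ?F" by (rule finite_subset[of _ "{1..m}"]) auto
  have ne: "?F \<noteq> {}" using assms by auto
  have "Max ?F \<in> ?F" by (rule Max_in[OF fin ne])
  moreover have "\<forall>j. Max ?F < j \<and> j \<le> m \<longrightarrow> c j = 0"
  proof (intro allI impI)
    fix j assume j: "Max ?F < j \<and> j \<le> m"
    show "c j = 0"
    proof (rule ccontr)
      assume "c j \<noteq> 0"
      hence "j \<in> ?F" using j \<open>Max ?F \<in> ?F\<close> by auto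
      hence "j \<le> Max ?F" using fin by (simp add: Max_ge)
      thus False using j by simp
    qed
  qed
  ultimately show ?thesis using that by blast
qed

lemma O_sub_C:
  assumes "k \<ge> 1" "Oc m k d"
  shows "Cc m k d"
proof -
  have up: "upper_var m d \<le> k" using assms(2) by (simp add: Oc_def)
  have lk: "lower_var m d \<le> k" using lower_le_upper[of m d] up by simp
  moreover have "\<exists>i\<in>{1..m}. d i > 0 \<and> (\<forall>j. i < j \<and> j \<le> m \<longrightarrow> d j = 0)"
    if eq: "lower_var m d = k"
  proof -
    have "\<exists>i\<in>{1..m}. d i \<noteq> 0"
    proof (rule ccontr)
      assume "\<not> ?thesis"
      hence "lower_var m d = 0" by (intro lower_zero) auto
      thus False using eq assms(1) by simp
    qed
    then obtain p where p: "p \<in> {1..m}" "d p \<noteq> 0" "\<forall>j. p < j \<and> j \<le> m \<longrightarrow> d j = 0"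
      by (rule last_nonzero)
    have ueq: "upper_var m d = k" using lower_le_upper[of m d] up eq by simp
    have "p = m"
    proof (rule ccontr)
      assume "p \<noteq> m"
      hence "p < m" using p(1) by simp
      from lower_lt_upper[OF p(1,3) this] show False using ueq eq by simp
    qed
    obtain s where s: "sign_assignment m d s" "s m = 1"
      using assms(2) ueq by (auto simp: Oc_def)
    have "sgn (d m) = 1" using s p \<open>p = m\<close> by (auto simp: sign_assignment_def)
    hence "d m > 0" by (simp add: sgn_1_pos)
    thus ?thesis using p(1) \<open>p = m\<close> by auto
  qed
  ultimately show ?thesis by (simp add: Cc_def)
qed

lemma agree_assign:
  assumes agree: "\<forall>i\<in>{1..m}. c i \<noteq> 0 \<longrightarrow> sgn (d i) = sgn (c i)"
    and "sign_assignment m d s"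
  shows "sign_assignment m c s"
  using assms unfolding sign_assignment_def
  by (auto simp: sgn_if split: if_splits)

lemma agree_lower:
  assumes agree: "\<forall>i\<in>{1..m}. c i \<noteq> 0 \<longrightarrow> sgn (d i) = sgn (c i)"
  shows "lower_var m c \<le> lower_var m d"
proof -
  obtain s where s: "sign_assignment m d s" "sign_changes m s = lower_var m d"
    using lower_attained by blast
  show ?thesis using lower_le[OF agree_assign[OF agree s(1)]] s(2) by simp
qed

lemma agree_last:
  assumes agree: "\<forall>i\<in>{1..m}. c i \<noteq> 0 \<longrightarrow> sgn (d i) = sgn (c i)"
    and eq: "lower_var m c = lower_var m d"
    and p: "p \<in> {1..m}" "c p \<noteq> 0" "\<forall>j. p < j \<and> j \<le> m \<longrightarrow> c j = 0"
    and q: "q \<in> {1..m}" "d q \<noteq> 0" "\<forall>j. q < j \<and> j \<le> m \<longrightarrow> d j = 0"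
  shows "sgn (d q) = sgn (c p)"
proof (rule ccontr)
  assume ne: "sgn (d q) \<noteq> sgn (c p)"
  have dp: "sgn (d p) = sgn (c p)" using agree p by auto
  hence "d p \<noteq> 0" using p(2) by (auto simp: sgn_if split: if_splits)
  hence pq: "p \<le> q" using q(3) p(1) by (meson leI atLeastAtMost_iff)
  obtain s where s: "sign_assignment m d s" "sign_changes m s = lower_var m d"
    using lower_attained by blast
  have sp: "s p = sgn (d p)" using s(1) p(1) \<open>d p \<noteq> 0\<close> by (auto simp: sign_assignment_def)
  have sq: "s q = sgn (d q)" using s(1) q(1,2) by (auto simp: sign_assignment_def)
  have pm: "\<forall>i\<in>{p..q}. s i = 1 \<or> s i = -1" using s(1) p(1) q(1)
    by (auto simp: sign_assignment_def)
  obtain i0 where i0: "i0 \<in> {p..<q}" "s i0 * s (i0 + 1) < 0"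
    using change_exists[OF pm pq] sp sq dp ne by auto
  have sc: "sign_assignment m c s" by (rule agree_assign[OF agree s(1)])
  have spm: "s p = 1 \<or> s p = -1" using assign_pm[OF s(1) p(1)] .
  have "lower_var m c \<le> card (Ap s p)"
    using lower_le[OF trunc_assign[OF sc p(1) p(3)]] trunc_changes[of s p m, OF spm] p(1) by simp
  moreover have "card (insert i0 (Ap s p)) \<le> sign_changes m s"
    unfolding sign_changes_def using i0 p(1) q(1) by (intro card_mono) (auto simp: Ap_def)
  moreover have "i0 \<notin> Ap s p" using i0 by (auto simp: Ap_def)
  moreover have "finite (Ap s p)" by (simp add: Ap_def)
  ultimately show False using eq s(2) by simp
qed

lemma C_approx:
  assumes "k \<ge> 1" "m \<ge> 1" "Cc m k c"
  shows "\<exists>f. (\<forall>j. f j \<noteq> 0 \<longrightarrow> j \<in> {1..m} \<and> c j = 0) \<and>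
    (\<forall>t>0. Oc m k (\<lambda>j. c j + t * f j))"
proof -
  obtain s where s: "sign_assignment m c s" "sign_changes m s = lower_var m c"
    using lower_attained by blast
  have "\<exists>s'. sign_assignment m c s' \<and> sign_changes m s' = lower_var m c \<and>
     (lower_var m c = k \<longrightarrow> s' m = 1)"
  proof (cases "lower_var m c = k")
    case False thus ?thesis using s by blast
  next
    case True
    then obtain i where i: "i \<in> {1..m}" "c i > 0" "\<forall>j. i < j \<and> j \<le> m \<longrightarrow> c j = 0"
      using assms(3) by (auto simp: Cc_def)
    have spm: "s i = 1 \<or> s i = -1" using assign_pm[OF s(1) i(1)] .
    have ta: "sign_assignment m c (trunc s i)" by (rule trunc_assign[OF s(1) i(1,3)])
    have "sign_changes m (trunc s i) = card (Ap s i)" using trunc_changes[of s i m, OF spm] i(1) by simp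
    moreover have "card (Ap s i) \<le> sign_changes m s" using Ap_le i(1) by simp
    moreover have "lower_var m c \<le> sign_changes m (trunc s i)" by (rule lower_le[OF ta])
    ultimately have "sign_changes m (trunc s i) = lower_var m c" using s(2) by simp
    moreover have "trunc s i m = 1"
      using s(1) i by (auto simp: trunc_def sign_assignment_def)
    ultimately show ?thesis using ta by blast
  qed
  then obtain s' where s': "sign_assignment m c s'" "sign_changes m s' = lower_var m c"
     "lower_var m c = k \<longrightarrow> s' m = 1" by blast
  define f where "f j = (if j \<in> {1..m} \<and> c j = 0 then s' j else 0)" for j
  have "Oc m k (\<lambda>j. c j + t * f j)" if t: "t > 0" for t
  proof -
    let ?d = "\<lambda>j. c j + t * f j"
    have sg: "sgn (?d j) = s' j \<and> ?d j \<noteq> 0" if j: "j \<in> {1..m}" for j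
    proof (cases "c j = 0")
      case True
      have "s' j = 1 \<or> s' j = -1" using assign_pm[OF s'(1) j] .
      thus ?thesis using True j t by (auto simp: f_def sgn_mult)
    next
      case False thus ?thesis using s'(1) j by (auto simp: f_def sign_assignment_def)
    qed
    have nz: "\<forall>i\<in>{1..m}. ?d i \<noteq> 0" using sg by blast
    have up: "upper_var m ?d = lower_var m c"
      using nonzero_vars(1)[OF nz] sign_changes_cong[of m "\<lambda>i. sgn (?d i)" s'] sg s'(2) by simp
    have "upper_var m ?d \<le> k" using up assms(3) by (simp add: Cc_def)
    moreover have "\<exists>s. sign_assignment m ?d s \<and> sign_changes m s = upper_var m ?d \<and> s m = 1"
      if "upper_var m ?d = k"
      using nonzero_vars[OF nz] sg[of m] assms(2) s'(3) that up by auto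
    ultimately show ?thesis by (simp add: Oc_def)
  qed
  moreover have "\<forall>j. f j \<noteq> 0 \<longrightarrow> j \<in> {1..m} \<and> c j = 0" by (auto simp: f_def)
  ultimately show ?thesis by blast
qed


lemma closed_eq: "closed_crooked_halfspace n E = {v \<in> Vsp n. Cc (dimN n) (2*n-1) (coords n E v)}"
  by (simp add: closed_crooked_halfspace_def Cc_def Let_def)

lemma open_eq: "open_crooked_halfspace n E = {v \<in> Vsp n. Oc (dimN n) (2*n-1) (coords n E v)}"
  by (simp add: open_crooked_halfspace_def Oc_def Let_def)

theorem lemma5p2:
  fixes n :: nat and E :: "nat \<Rightarrow> nat \<Rightarrow> real"
  assumes "n \<ge> 1"
    and "J_basis n E"
    and "pos_oriented n E"
  shows "closed_crooked_halfspace n E = closure (open_crooked_halfspace n E)"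
proof -
  let ?m = "dimN n" and ?k = "2*n - 1"
  have k1: "?k \<ge> 1" and m1: "?m \<ge> 1" using assms(1) by (auto simp: dimN_def)
  note JB = assms(2)
  show ?thesis unfolding closed_eq open_eq
  proof
    show "{v \<in> Vsp n. Cc ?m ?k (coords n E v)} \<subseteq> closure {v \<in> Vsp n. Oc ?m ?k (coords n E v)}"
    proof
      fix v assume v: "v \<in> {v \<in> Vsp n. Cc ?m ?k (coords n E v)}"
      let ?c = "coords n E v"
      have vL: "v = Lf n E ?c" and csupp: "\<forall>i. i \<notin> {1..?m} \<longrightarrow> ?c i = 0"
        using coords_Vsp[OF JB] v by auto
      obtain f where f: "\<forall>j. f j \<noteq> 0 \<longrightarrow> j \<in> {1..?m} \<and> ?c j = 0"
        "\<forall>t>0. Oc ?m ?k (\<lambda>j. ?c j + t * f j)"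
        using C_approx[OF k1 m1] v by blast
      define \<phi> where "\<phi> t = Lf n E (\<lambda>j. ?c j + t * f j)" for t
      have supp: "\<forall>i. i \<notin> {1..?m} \<longrightarrow> ?c i + t * f i = 0" for t
        using csupp f(1) by auto
      have inO: "\<phi> t \<in> {v \<in> Vsp n. Oc ?m ?k (coords n E v)}" if "t > 0" for t
        using Lf_Vsp[OF JB] coords_Lf[OF JB supp[of t]] f(2) that by (simp add: \<phi>_def)
      have cont: "continuous_on UNIV \<phi>"
        unfolding \<phi>_def Lf_def
        by (intro continuous_on_coordinatewise_then_product continuous_intros)
      have "\<phi> 0 = v" using vL by (simp add: \<phi>_def)
      have "((\<phi> \<circ> (\<lambda>j. inverse (real (Suc j)))) \<longlongrightarrow> \<phi> 0) sequentially"
        using continuous_on_tendsto_compose[OF cont LIMSEQ_inverse_real_of_nat] by (simp add: comp_def)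
      moreover have "\<forall>j. (\<phi> \<circ> (\<lambda>j. inverse (real (Suc j)))) j \<in> {v \<in> Vsp n. Oc ?m ?k (coords n E v)}"
        using inO by simp
      ultimately show "v \<in> closure {v \<in> Vsp n. Oc ?m ?k (coords n E v)}"
        unfolding closure_sequential using \<open>\<phi> 0 = v\<close> by metis
    qed
  next
    show "closure {v \<in> Vsp n. Oc ?m ?k (coords n E v)} \<subseteq> {v \<in> Vsp n. Cc ?m ?k (coords n E v)}"
    proof
      fix v assume vcl: "v \<in> closure {v \<in> Vsp n. Oc ?m ?k (coords n E v)}"
      have "closure {v \<in> Vsp n. Oc ?m ?k (coords n E v)} \<subseteq> Vsp n"
        by (rule closure_minimal) (auto simp: closed_Vsp)
      hence vV: "v \<in> Vsp n" using vcl by blast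
      let ?c = "coords n E v"
      have cK: "?c = Kf n E v" using coords_Vsp[OF JB vV] by simp
      show "v \<in> {v \<in> Vsp n. Cc ?m ?k (coords n E v)}"
      proof (rule ccontr)
        assume nC: "v \<notin> {v \<in> Vsp n. Cc ?m ?k (coords n E v)}"
        hence nCc: "\<not> Cc ?m ?k ?c" using vV by simp
        define F where "F = {j\<in>{1..?m}. ?c j \<noteq> 0}"
        have finF: "finite F" by (rule finite_subset[of _ "{1..?m}"]) (auto simp: F_def)
        define U where "U = (\<Inter>j\<in>F. {w. 0 < sgn (?c j) * ((-1)^j * Jform n (E (4*n - j)) w)})"
        have "open U" unfolding U_def using finF
          by (intro open_INT ballI open_Collect_less continuous_intros cont_Jform) auto
        moreover have "v \<in> U"
        proof -
          have "0 < sgn (?c j) * ((-1)^j * Jform n (E (4*n - j)) v)" if "j \<in> F" for j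
          proof -
            have "?c j = (-1)^j * Jform n (E (4*n - j)) v" using that cK by (auto simp: F_def Kf_def)
            moreover have "0 < sgn (?c j) * ?c j" using that by (auto simp: F_def sgn_if)
            ultimately show ?thesis by simp
          qed
          thus ?thesis by (auto simp: U_def)
        qed
        ultimately have "{v \<in> Vsp n. Oc ?m ?k (coords n E v)} \<inter> U \<noteq> {}"
          using vcl unfolding closure_iff_nhds_not_empty by blast
        then obtain w where w: "w \<in> Vsp n" "Oc ?m ?k (coords n E w)" "w \<in> U" by blast
        let ?d = "coords n E w"
        have dK: "?d = Kf n E w" using coords_Vsp[OF JB w(1)] by simp
        have Cd: "Cc ?m ?k ?d" by (rule O_sub_C[OF k1 w(2)])
        have agree: "\<forall>i\<in>{1..?m}. ?c i \<noteq> 0 \<longrightarrow> sgn (?d i) = sgn (?c i)"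
        proof (intro ballI impI)
          fix i assume i: "i \<in> {1..?m}" "?c i \<noteq> 0"
          hence "i \<in> F" by (simp add: F_def)
          hence "0 < sgn (?c i) * ?d i" using w(3) i dK by (auto simp: U_def Kf_def)
          thus "sgn (?d i) = sgn (?c i)"
            by (cases "?c i > 0") (auto simp: sgn_if zero_less_mult_iff split: if_splits)
        qed
        have lc: "lower_var ?m ?c \<le> lower_var ?m ?d" by (rule agree_lower[OF agree])
        have ld: "lower_var ?m ?d \<le> ?k" using Cd by (simp add: Cc_def)
        have lck: "lower_var ?m ?c = ?k"
          and nex: "\<not> (\<exists>i\<in>{1..?m}. ?c i > 0 \<and> (\<forall>j. i < j \<and> j \<le> ?m \<longrightarrow> ?c j = 0))"
          using nCc lc ld by (auto simp: Cc_def)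
        have ldk: "lower_var ?m ?d = ?k" using lc ld lck by simp
        have "\<exists>i\<in>{1..?m}. ?c i \<noteq> 0"
        proof (rule ccontr)
          assume "\<not> ?thesis"
          hence "lower_var ?m ?c = 0" by (intro lower_zero) auto
          thus False using lck k1 by simp
        qed
        then obtain p where p: "p \<in> {1..?m}" "?c p \<noteq> 0" "\<forall>j. p < j \<and> j \<le> ?m \<longrightarrow> ?c j = 0"
          by (rule last_nonzero)
        have cpn: "?c p < 0" using p nex by force
        obtain q where q: "q \<in> {1..?m}" "?d q > 0" "\<forall>j. q < j \<and> j \<le> ?m \<longrightarrow> ?d j = 0"
          using Cd ldk by (auto simp: Cc_def)
        have "sgn (?d q) = sgn (?c p)"
          using agree_last[OF agree _ p q(1) _ q(3)] q(2) lck ldk by simp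
        thus False using cpn q(2) by simp
      qed
    qed
  qed
qed


end
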